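(* Let $A,B\in\Omega_n$, with eigenvalues (listed with algebraic multiplicity) $\lambda_1,\dots,\lambda_n$ of $A$ and $\mu_1,\dots,\mu_n$ of $B$. Then $$l_{\mathbb G_n}(\sigma(A),\sigma(B))\le l_{\Omega_n}(A,B)\le \min_{\pi}\max_{1\le j\le n} m(\lambda_j,\mu_{\pi(j)}),$$ where the minimum is over all permutations $\pi$ of $\{1,\dots,n\}$.
   Context: $\mathcal M_n$ is the space of complex $n\times n$ matrices, $r(A)$ the spectral radius, $\Omega_n=\{A\in\mathcal M_n: r(A)<1\}$ the spectral ball, $\mathbb D$ the open unit disc. $\sigma=(\sigma_1,\dots,\sigma_n)$ where $\sigma_j(A)$ is the $j$-th elementary symmetric function of the eigenvalues of $A$ (so $\det(tI-A)=t^n+\sum_j(-1)^j\sigma_j(A)t^{n-j}$); $\mathbb G_n=\sigma(\Omega_n)\subset\mathbb C^n$ is the symmetrized $n$-disc. $m(a,b)=\left|\frac{a-b}{1-a\bar b}\right|$ for $a,b\in\mathbb D$. For a domain $D\subset\mathbb C^k$, $l_D(z,w)=\inf\{|\alpha|:\exists\varphi\in\mathcal O(\mathbb D,D),\ \varphi(0)=z,\ \varphi(\alpha)=w\}$ is the Lempert function. *)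

theory Defs
  imports "HOL-Analysis.Analysis" "Jordan_Normal_Form.Spectral_Radius"
begin

definition spectral_ball :: "nat \<Rightarrow> complex mat set" where
  "spectral_ball n = {A \<in> carrier_mat n n. spectral_radius A < 1}"

text \<open>j-th elementary symmetric function of the eigenvalues, via
  det(tI - A) = t^n + sum_j (-1)^j sigma_j(A) t^(n-j).\<close>
definition sigma_j :: "nat \<Rightarrow> complex mat \<Rightarrow> complex" where
  "sigma_j j A = (-1) ^ j * coeff (char_poly A) (dim_row A - j)"

definition sigma_map :: "complex mat \<Rightarrow> complex vec" where
  "sigma_map A = vec (dim_row A) (\<lambda>k. sigma_j (Suc k) A)"

definition symmetrized_polydisc :: "nat \<Rightarrow> complex vec set" where
  "symmetrized_polydisc n = sigma_map ` spectral_ball n"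

definition moebius_dist :: "complex \<Rightarrow> complex \<Rightarrow> real" where
  "moebius_dist a b = cmod ((a - b) / (1 - a * cnj b))"

definition holo_vec :: "nat \<Rightarrow> (complex \<Rightarrow> complex vec) \<Rightarrow> complex set \<Rightarrow> bool" where
  "holo_vec n \<phi> S \<longleftrightarrow> (\<forall>k<n. (\<lambda>z. vec_index (\<phi> z) k) holomorphic_on S)"

definition holo_mat :: "nat \<Rightarrow> (complex \<Rightarrow> complex mat) \<Rightarrow> complex set \<Rightarrow> bool" where
  "holo_mat n \<phi> S \<longleftrightarrow> (\<forall>i<n. \<forall>j<n. (\<lambda>z. \<phi> z $$ (i, j)) holomorphic_on S)"

definition lempert_vec :: "nat \<Rightarrow> complex vec set \<Rightarrow> complex vec \<Rightarrow> complex vec \<Rightarrow> real" where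
  "lempert_vec n D z w = Inf {cmod \<alpha> | \<alpha>. \<exists>\<phi>. holo_vec n \<phi> (ball 0 1) \<and>
      (\<forall>\<zeta>\<in>ball 0 1. \<phi> \<zeta> \<in> D) \<and> \<phi> 0 = z \<and> \<alpha> \<in> ball 0 1 \<and> \<phi> \<alpha> = w}"

definition lempert_mat :: "nat \<Rightarrow> complex mat set \<Rightarrow> complex mat \<Rightarrow> complex mat \<Rightarrow> real" where
  "lempert_mat n D z w = Inf {cmod \<alpha> | \<alpha>. \<exists>\<phi>. holo_mat n \<phi> (ball 0 1) \<and>
      (\<forall>\<zeta>\<in>ball 0 1. \<phi> \<zeta> \<in> D) \<and> \<phi> 0 = z \<and> \<alpha> \<in> ball 0 1 \<and> \<phi> \<alpha> = w}"

end

theory Submission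
  imports Defs "HOL-Complex_Analysis.Riemann_Mapping"
begin

definition hm :: "nat \<Rightarrow> (complex \<Rightarrow> complex mat) \<Rightarrow> complex set \<Rightarrow> bool" where
  "hm n F S \<longleftrightarrow> (\<forall>z\<in>S. F z \<in> carrier_mat n n) \<and>
     (\<forall>i<n. \<forall>j<n. (\<lambda>z. F z $$ (i,j)) holomorphic_on S)"

lemma hm_det:
  assumes "hm n F S"
  shows "(\<lambda>z. det (F z)) holomorphic_on S"
proof -
  have c: "\<And>z. z \<in> S \<Longrightarrow> F z \<in> carrier_mat n n" using assms by (auto simp: hm_def)
  have h: "\<And>i j. i < n \<Longrightarrow> j < n \<Longrightarrow> (\<lambda>z. F z $$ (i,j)) holomorphic_on S"
    using assms by (auto simp: hm_def)
  have "(\<lambda>z. \<Sum>p\<in>{p. p permutes {0..<n}}. signof p * (\<Prod>i=0..<n. F z $$ (i, p i))) holomorphic_on S"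
  proof (intro holomorphic_intros)
    fix p i assume "p \<in> {p. p permutes {0..<n}}" "i \<in> {0..<n}"
    then have "p i < n" using permutes_in_image by fastforce
    then show "(\<lambda>z. F z $$ (i, p i)) holomorphic_on S" using h \<open>i \<in> {0..<n}\<close> by auto
  qed
  then show ?thesis
    by (rule holomorphic_transform) (use c in \<open>auto simp: det_def\<close>)
qed

lemma hm_mult:
  assumes "hm n F S" "hm n G S"
  shows "hm n (\<lambda>z. F z * G z) S"
  unfolding hm_def
proof (intro conjI ballI allI impI)
  fix z assume "z \<in> S" then show "F z * G z \<in> carrier_mat n n"
    using assms by (auto simp: hm_def)
next
  fix i j assume ij: "i < n" "j < n"
  have "(\<lambda>z. \<Sum>k\<in>{0..<n}. F z $$ (i,k) * G z $$ (k,j)) holomorphic_on S"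
    using assms ij by (intro holomorphic_intros) (auto simp: hm_def)
  then show "(\<lambda>z. (F z * G z) $$ (i, j)) holomorphic_on S"
  proof (rule holomorphic_transform)
    fix x assume "x \<in> S"
    then have "F x \<in> carrier_mat n n" "G x \<in> carrier_mat n n" using assms by (auto simp: hm_def)
    then show "(\<Sum>k\<in>{0..<n}. F x $$ (i,k) * G x $$ (k,j)) = (F x * G x) $$ (i, j)"
      using ij by (auto simp: scalar_prod_def)
  qed
qed

lemma hm_const: "A \<in> carrier_mat n n \<Longrightarrow> hm n (\<lambda>z. A) S"
  by (auto simp: hm_def)

lemma hm_delete:
  assumes "hm n F S" "i < n" "j < n"
  shows "hm (n-1) (\<lambda>z. mat_delete (F z) i j) S"
  unfolding hm_def
proof (intro conjI ballI allI impI)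
  fix z assume "z \<in> S" then show "mat_delete (F z) i j \<in> carrier_mat (n-1) (n-1)"
    using assms mat_delete_carrier[of "F z" n n i j] by (auto simp: hm_def)
next
  fix a b assume ab: "a < n-1" "b < n-1"
  have "(\<lambda>z. F z $$ (if a < i then a else Suc a, if b < j then b else Suc b)) holomorphic_on S"
    using assms ab by (auto simp: hm_def)
  then show "(\<lambda>z. mat_delete (F z) i j $$ (a, b)) holomorphic_on S"
    by (rule holomorphic_transform) (use assms ab in \<open>auto simp: hm_def mat_delete_def\<close>)
qed

lemma hm_adj:
  assumes "hm n F S"
  shows "hm n (\<lambda>z. adj_mat (F z)) S"
  unfolding hm_def
proof (intro conjI ballI allI impI)
  fix z assume "z \<in> S" then show "adj_mat (F z) \<in> carrier_mat n n"
    using assms by (auto simp: hm_def adj_mat_def)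
next
  fix i j assume ij: "i < n" "j < n"
  have "(\<lambda>z. (-1)^(j+i) * det (mat_delete (F z) j i)) holomorphic_on S"
    using hm_det[OF hm_delete[OF assms ij(2) ij(1)]] by (intro holomorphic_intros)
  then show "(\<lambda>z. adj_mat (F z) $$ (i, j)) holomorphic_on S"
    by (rule holomorphic_transform) (use assms ij in \<open>auto simp: hm_def adj_mat_def cofactor_def\<close>)
qed

lemma hm_smult:
  assumes "hm n F S" "g holomorphic_on S"
  shows "hm n (\<lambda>z. g z \<cdot>\<^sub>m F z) S"
  unfolding hm_def
proof (intro conjI ballI allI impI)
  fix z assume "z \<in> S" then show "g z \<cdot>\<^sub>m F z \<in> carrier_mat n n"
    using assms by (auto simp: hm_def)
next
  fix i j assume ij: "i < n" "j < n"
  have "(\<lambda>z. g z * F z $$ (i,j)) holomorphic_on S"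
    using assms ij by (intro holomorphic_intros) (auto simp: hm_def)
  then show "(\<lambda>z. (g z \<cdot>\<^sub>m F z) $$ (i, j)) holomorphic_on S"
    by (rule holomorphic_transform) (use assms ij in \<open>auto simp: hm_def\<close>)
qed

lemma hm_mat:
  assumes "\<And>i j. i < n \<Longrightarrow> j < n \<Longrightarrow> (\<lambda>z. f z i j) holomorphic_on S"
  shows "hm n (\<lambda>z. mat n n (\<lambda>(i,j). f z i j)) S"
  unfolding hm_def using assms by auto


definition ph :: "(complex \<Rightarrow> complex poly) \<Rightarrow> complex set \<Rightarrow> bool" where
  "ph F S \<longleftrightarrow> (\<forall>k. (\<lambda>z. coeff (F z) k) holomorphic_on S)"

lemma ph_const: "ph (\<lambda>z. p) S" by (simp add: ph_def)

lemma ph_add: "ph F S \<Longrightarrow> ph G S \<Longrightarrow> ph (\<lambda>z. F z + G z) S"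
  by (auto simp: ph_def intro!: holomorphic_intros)

lemma ph_mult: "ph F S \<Longrightarrow> ph G S \<Longrightarrow> ph (\<lambda>z. F z * G z) S"
  unfolding ph_def coeff_mult by (auto intro!: holomorphic_intros)

lemma ph_sum: "finite A \<Longrightarrow> (\<And>a. a \<in> A \<Longrightarrow> ph (F a) S) \<Longrightarrow> ph (\<lambda>z. \<Sum>a\<in>A. F a z) S"
  by (induction A rule: finite_induct) (auto intro: ph_add ph_const)

lemma ph_prod: "finite A \<Longrightarrow> (\<And>a. a \<in> A \<Longrightarrow> ph (F a) S) \<Longrightarrow> ph (\<lambda>z. \<Prod>a\<in>A. F a z) S"
  by (induction A rule: finite_induct) (auto intro: ph_mult ph_const)

lemma ph_pCons: "f holomorphic_on S \<Longrightarrow> ph (\<lambda>z. [: f z :]) S"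
  unfolding ph_def
proof
  fix k assume "f holomorphic_on S"
  then show "(\<lambda>z. coeff [:f z:] k) holomorphic_on S"
    by (cases k) (auto intro: holomorphic_intros)
qed

lemma ph_det:
  assumes c: "\<And>z. z \<in> S \<Longrightarrow> F z \<in> carrier_mat n n"
    and h: "\<And>i j. i < n \<Longrightarrow> j < n \<Longrightarrow> ph (\<lambda>z. F z $$ (i,j)) S"
  shows "ph (\<lambda>z. det (F z)) S"
proof -
  have "ph (\<lambda>z. \<Sum>p\<in>{p. p permutes {0..<n}}. signof p * (\<Prod>i=0..<n. F z $$ (i, p i))) S"
  proof (rule ph_sum)
    fix p assume p: "p \<in> {p. p permutes {0..<n}}"
    show "ph (\<lambda>z. signof p * (\<Prod>i=0..<n. F z $$ (i, p i))) S"
    proof (rule ph_mult[OF ph_const], rule ph_prod)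
      fix i assume "i \<in> {0..<n}"
      moreover then have "p i < n" using p permutes_in_image by fastforce
      ultimately show "ph (\<lambda>z. F z $$ (i, p i)) S" using h by auto
    qed simp
  qed (simp add: finite_permutations)
  then show ?thesis unfolding ph_def
  proof (intro allI, elim allE)
    fix k assume "(\<lambda>z. coeff (\<Sum>p\<in>{p. p permutes {0..<n}}. signof p * (\<Prod>i=0..<n. F z $$ (i, p i))) k) holomorphic_on S"
    then show "(\<lambda>z. coeff (det (F z)) k) holomorphic_on S"
      by (rule holomorphic_transform) (use c in \<open>auto simp: det_def\<close>)
  qed
qed

lemma hm_char_poly_coeff:
  assumes "hm n F S"
  shows "(\<lambda>z. coeff (char_poly (F z)) k) holomorphic_on S"
proof -
  have c: "\<And>z. z \<in> S \<Longrightarrow> F z \<in> carrier_mat n n" using assms by (auto simp: hm_def)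
  have h: "\<And>i j. i < n \<Longrightarrow> j < n \<Longrightarrow> (\<lambda>z. F z $$ (i,j)) holomorphic_on S"
    using assms by (auto simp: hm_def)
  have "ph (\<lambda>z. det (char_poly_matrix (F z))) S"
  proof (rule ph_det)
    fix z assume "z \<in> S" then show "char_poly_matrix (F z) \<in> carrier_mat n n" using c by simp
  next
    fix i j assume ij: "i < n" "j < n"
    have "ph (\<lambda>z. (if i = j then [:0,1:] else 0) + [: - F z $$ (i,j) :]) S"
      by (rule ph_add[OF ph_const ph_pCons]) (use h ij in \<open>auto intro: holomorphic_intros\<close>)
    then show "ph (\<lambda>z. char_poly_matrix (F z) $$ (i, j)) S"
      unfolding ph_def
    proof (intro allI, elim allE)
      fix k assume "(\<lambda>z. coeff ((if i = j then [:0,1:] else 0) + [: - F z $$ (i,j) :]) k) holomorphic_on S"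
      then show "(\<lambda>z. coeff (char_poly_matrix (F z) $$ (i, j)) k) holomorphic_on S"
      proof (rule holomorphic_transform)
        fix x assume "x \<in> S"
        then have "F x \<in> carrier_mat n n" using c by auto
        then show "coeff ((if i = j then [:0,1:] else 0) + [: - F x $$ (i,j) :]) k = coeff (char_poly_matrix (F x) $$ (i, j)) k"
          using ij by (auto simp: char_poly_matrix_def coeff_pCons split: nat.split)
      qed
    qed
  qed
  then show ?thesis by (simp add: ph_def char_poly_def)
qed


lemma spectrum_linear:
  fixes A :: "complex mat"
  assumes A: "A \<in> carrier_mat n n" and cp: "char_poly A = (\<Prod>a\<leftarrow>xs. [:- a, 1:])"
  shows "spectrum A = set xs"
proof -
  have "spectrum A = {k. poly (\<Prod>a\<leftarrow>xs. [:- a, 1:]) k = 0}"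
    using spectrum_root_char_poly[OF A] cp by simp
  also have "\<dots> = set xs"
    by (induction xs) auto
  finally show ?thesis .
qed

lemma sr_linear_lt1:
  assumes A: "A \<in> carrier_mat n n" and n: "n > 0" and cp: "char_poly A = (\<Prod>a\<leftarrow>xs. [:- a, 1:])"
    and b: "\<And>x. x \<in> set xs \<Longrightarrow> norm x < 1"
  shows "spectral_radius A < 1"
  using spectral_radius_mem_max(1)[OF A n] spectrum_linear[OF A cp] b by auto

lemma root_lt1:
  assumes A: "A \<in> spectral_ball n" and cp: "char_poly A = (\<Prod>j<n. [:- lam j, 1:])" and j: "j < n"
  shows "norm (lam j) < 1"
proof -
  have Ac: "A \<in> carrier_mat n n" and sr: "spectral_radius A < 1" using A by (auto simp: spectral_ball_def)
  have "poly (char_poly A) (lam j) = 0" unfolding cp poly_prod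
    by (rule prod_zero) (use j in auto)
  then have "lam j \<in> spectrum A" using spectrum_root_char_poly[OF Ac] by auto
  then have "norm (lam j) \<le> spectral_radius A" using spectral_radius_mem_max(2)[OF Ac] j by auto
  with sr show ?thesis by simp
qed

lemma disc_interp:
  assumes l: "norm l < 1" and m: "norm m < 1" and d: "moebius_dist l m < t" and t: "t < 1"
  shows "\<exists>f. f holomorphic_on ball 0 1 \<and> (\<forall>z\<in>ball 0 1. norm (f z) < 1) \<and> f 0 = l \<and> f (of_real t) = m"
proof -
  define w where "w = Moebius_function 0 l m"
  have nw: "norm w = moebius_dist l m"
  proof -
    have "norm (1 - cnj l * m) = norm (cnj (1 - cnj l * m))" by (rule complex_mod_cnj[symmetric])
    also have "\<dots> = norm (1 - l * cnj m)" by simp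
    finally have e: "norm (1 - cnj l * m) = norm (1 - l * cnj m)" .
    have "norm (m - l) = norm (l - m)" by (rule norm_minus_commute)
    then show ?thesis using e by (simp add: w_def Moebius_function_def moebius_dist_def norm_divide)
  qed
  have t0: "t > 0" using d nw norm_ge_zero[of w] by linarith
  define c where "c = w / of_real t"
  have nc: "norm c < 1" using nw d t0 by (simp add: c_def norm_divide)
  define f where "f = (\<lambda>z. Moebius_function 0 (-l) (z * c))"
  have hol: "f holomorphic_on ball 0 1"
  proof -
    have "Moebius_function 0 (-l) \<circ> (\<lambda>z. z * c) holomorphic_on ball 0 1"
    proof (rule holomorphic_on_compose_gen)
      show "(\<lambda>z. z * c) holomorphic_on ball 0 1" by (intro holomorphic_intros)
      show "Moebius_function 0 (- l) holomorphic_on ball 0 1" using Moebius_function_holomorphic l by simp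
      show "(\<lambda>z. z * c) ` ball 0 1 \<subseteq> ball 0 1"
      proof
        fix y assume "y \<in> (\<lambda>z. z * c) ` ball 0 1"
        then obtain z :: complex where "z \<in> ball 0 1" "y = z * c" by auto
        then show "y \<in> ball 0 1" using nc mult_strict_mono'[of "cmod z" 1 "cmod c" 1] by (simp add: norm_mult)
      qed
    qed
    then show ?thesis by (simp add: f_def o_def)
  qed
  have bd: "\<forall>z\<in>ball 0 1. norm (f z) < 1"
  proof
    fix z :: complex assume "z \<in> ball 0 1"
    then have "norm (z * c) < 1" using nc mult_strict_mono'[of "cmod z" 1 "cmod c" 1] by (simp add: norm_mult)
    then show "norm (f z) < 1" unfolding f_def using Moebius_function_norm_lt_1 l by simp
  qed
  have f0: "f 0 = l" by (simp add: f_def Moebius_function_def)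
  have ft: "f (of_real t) = m"
  proof -
    have "of_real t * c = w" using t0 by (simp add: c_def)
    then have "f (of_real t) = Moebius_function 0 (-l) (Moebius_function 0 l m)" by (simp add: f_def w_def)
    also have "\<dots> = m" by (rule Moebius_function_compose) (use l m in auto)
    finally show ?thesis .
  qed
  show ?thesis using hol bd f0 ft by blast
qed


lemma cancel_l:
  fixes U V X :: "complex mat"
  assumes "U \<in> carrier_mat n n" "V \<in> carrier_mat n n" "X \<in> carrier_mat n m" "U * V = 1\<^sub>m n"
  shows "U * (V * X) = X"
proof -
  have "U * (V * X) = (U * V) * X" using assoc_mult_mat[OF assms(1) assms(2) assms(3)] by simp
  also have "\<dots> = X" using assms by (simp add: left_mult_one_mat)
  finally show ?thesis .
qed

lemma assoc_n:
  fixes A B C :: "complex mat"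
  shows "A \<in> carrier_mat n n \<Longrightarrow> B \<in> carrier_mat n n \<Longrightarrow> C \<in> carrier_mat n n \<Longrightarrow> A * B * C = A * (B * C)"
  by (rule assoc_mult_mat)

lemma mult_n: "(A::complex mat) \<in> carrier_mat n n \<Longrightarrow> B \<in> carrier_mat n n \<Longrightarrow> A * B \<in> carrier_mat n n"
  by (rule mult_carrier_mat)

lemma inv_smult_smult: "(d::complex) \<noteq> 0 \<Longrightarrow> (1 / d) \<cdot>\<^sub>m (d \<cdot>\<^sub>m 1\<^sub>m n) = 1\<^sub>m n"
  by (rule eq_matI) auto

lemma gl_path:
  fixes P0 Q0 P1 Q1 :: "complex mat" and t :: complex
  assumes c: "P0 \<in> carrier_mat n n" "Q0 \<in> carrier_mat n n" "P1 \<in> carrier_mat n n" "Q1 \<in> carrier_mat n n"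
    and i0: "P0 * Q0 = 1\<^sub>m n" "Q0 * P0 = 1\<^sub>m n" and i1: "P1 * Q1 = 1\<^sub>m n" "Q1 * P1 = 1\<^sub>m n"
    and t: "t \<noteq> 0"
  shows "\<exists>P Q. hm n P UNIV \<and> hm n Q UNIV \<and> (\<forall>z. P z * Q z = 1\<^sub>m n \<and> Q z * P z = 1\<^sub>m n)
     \<and> P 0 = P0 \<and> P t = P1 \<and> Q 0 = Q0 \<and> Q t = Q1"
proof -
  define N where "N = Q0 * P1"
  have Nc: "N \<in> carrier_mat n n" using c by (simp add: N_def)
  obtain as where cpN: "char_poly N = (\<Prod>a\<leftarrow>as. [:- a, 1:])" using char_poly_factorized[OF Nc] by blast
  obtain R U V where sd: "schur_decomposition N as = (R,U,V)" by (cases "schur_decomposition N as") auto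
  from schur_decomposition[OF Nc cpN sd] have sw: "similar_mat_wit N R U V" and ut: "upper_triangular R" by auto
  from sw Nc have Rc: "R \<in> carrier_mat n n" and Uc: "U \<in> carrier_mat n n" and Vc: "V \<in> carrier_mat n n"
    and UV: "U * V = 1\<^sub>m n" and VU: "V * U = 1\<^sub>m n" and NR: "N = U * R * V"
    by (auto simp: similar_mat_wit_def Let_def)
  have "N * (Q1 * P0) = 1\<^sub>m n"
  proof -
    have "N * (Q1 * P0) = Q0 * (P1 * (Q1 * P0))" using c assoc_mult_mat[of Q0 n n P1 n "Q1*P0" n] by (simp add: N_def)
    also have "\<dots> = Q0 * P0" using cancel_l[OF c(3) c(4) c(1) i1(1)] by simp
    finally show ?thesis using i0 by simp
  qed
  then have "det N * det (Q1 * P0) = 1" using det_mult[OF Nc, of "Q1 * P0"] c by simp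
  then have dN: "det N \<noteq> 0" by auto
  have "det U * det V = 1" using det_mult[OF Uc Vc] UV by simp
  have RN: "R = V * N * U"
  proof -
    have "V * N * U = V * (U * (R * (V * U)))" using Uc Vc Rc by (simp add: NR assoc_n mult_n)
    also have "\<dots> = R" using cancel_l[OF Vc Uc mult_n[OF Rc mult_n[OF Vc Uc]] VU] Rc VU by (simp add: right_mult_one_mat)
    finally show ?thesis by simp
  qed
  have "det R = det V * det N * det U" unfolding RN
    using det_mult[OF mult_carrier_mat[OF Vc Nc] Uc] det_mult[OF Vc Nc] by simp
  with dN \<open>det U * det V = 1\<close> have dR: "det R \<noteq> 0" by auto
  have diag: "\<And>i. i < n \<Longrightarrow> R $$ (i,i) \<noteq> 0"
  proof -
    fix i assume i: "i < n"
    have "det R = (\<Prod>k = 0..<n. R $$ (k,k))" using det_upper_triangular[OF ut Rc] prod_list_diag_prod[of R] Rc by (simp add: carrier_matD)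
    then show "R $$ (i,i) \<noteq> 0" using dR i by auto
  qed
  define L where "L i = Ln (R $$ (i,i))" for i
  define Rz where "Rz z = mat n n (\<lambda>(i,j). if i = j then exp (z / t * L i) else if i < j then z / t * R $$ (i,j) else 0)" for z
  have Rzc: "Rz z \<in> carrier_mat n n" for z by (simp add: Rz_def)
  have Rzut: "upper_triangular (Rz z)" for z by (auto simp: Rz_def upper_triangular_def)
  have dRz: "det (Rz z) = (\<Prod>k = 0..<n. exp (z / t * L k))" for z
    using det_upper_triangular[OF Rzut Rzc] prod_list_diag_prod[of "Rz z"] by (simp add: Rz_def)
  have dRz0: "det (Rz z) \<noteq> 0" for z unfolding dRz by simp
  have hRz: "hm n Rz UNIV" unfolding Rz_def
  proof (rule hm_mat)
    fix i j show "(\<lambda>z. if i = j then exp (z / t * L i) else if i < j then z / t * R $$ (i,j) else 0) holomorphic_on UNIV"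
      by (cases "i = j"; cases "i < j") (auto intro!: holomorphic_intros)
  qed
  define Ri where "Ri z = (1 / det (Rz z)) \<cdot>\<^sub>m adj_mat (Rz z)" for z
  have hRi: "hm n Ri UNIV" unfolding Ri_def
    by (rule hm_smult[OF hm_adj[OF hRz]]) (use hm_det[OF hRz] dRz0 in \<open>auto intro!: holomorphic_intros\<close>)
  have Ric: "Ri z \<in> carrier_mat n n" for z using adj_mat(1)[OF Rzc] by (simp add: Ri_def)
  have RRi: "Rz z * Ri z = 1\<^sub>m n" for z
    using adj_mat(2)[OF Rzc[of z]] mult_smult_distrib[OF Rzc adj_mat(1)[OF Rzc[of z]]] dRz0[of z]
    by (simp add: Ri_def inv_smult_smult)
  have RiR: "Ri z * Rz z = 1\<^sub>m n" for z
    using adj_mat(3)[OF Rzc[of z]] mult_smult_assoc_mat[OF adj_mat(1)[OF Rzc[of z]] Rzc] dRz0[of z]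
    by (simp add: Ri_def inv_smult_smult)
  have Rz0: "Rz 0 = 1\<^sub>m n" by (rule eq_matI) (auto simp: Rz_def)
  have Rzt: "Rz t = R"
    by (rule eq_matI) (use Rc ut diag t in \<open>auto simp: Rz_def L_def upper_triangular_def\<close>)
  define P where "P z = P0 * (U * (Rz z * V))" for z
  define Q where "Q z = U * (Ri z * (V * Q0))" for z
  have hP: "hm n P UNIV" unfolding P_def
    by (intro hm_mult hm_const c Uc Vc hRz)
  have hQ: "hm n Q UNIV" unfolding Q_def
    by (intro hm_mult hm_const c Uc Vc hRi)
  have PQ: "P z * Q z = 1\<^sub>m n" for z
  proof -
    have "P z * Q z = P0 * (U * (Rz z * (V * (U * (Ri z * (V * Q0))))))"
      using c Uc Vc Rzc[of z] Ric[of z] by (simp add: P_def Q_def assoc_n mult_n)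
    also have "\<dots> = P0 * (U * (Rz z * (Ri z * (V * Q0))))"
      using cancel_l[OF Vc Uc mult_n[OF Ric mult_n[OF Vc c(2)]] VU] by simp
    also have "\<dots> = P0 * (U * (V * Q0))"
      using cancel_l[OF Rzc Ric mult_n[OF Vc c(2)] RRi] by simp
    also have "\<dots> = P0 * Q0" using cancel_l[OF Uc Vc c(2) UV] by simp
    finally show ?thesis using i0 by simp
  qed
  have QP: "Q z * P z = 1\<^sub>m n" for z
  proof -
    have "Q z * P z = U * (Ri z * (V * (Q0 * (P0 * (U * (Rz z * V))))))"
      using c Uc Vc Rzc[of z] Ric[of z] by (simp add: P_def Q_def assoc_n mult_n)
    also have "\<dots> = U * (Ri z * (V * (U * (Rz z * V))))"
      using cancel_l[OF c(2) c(1) mult_n[OF Uc mult_n[OF Rzc Vc]] i0(2)] by simp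
    also have "\<dots> = U * (Ri z * (Rz z * V))"
      using cancel_l[OF Vc Uc mult_n[OF Rzc Vc] VU] by simp
    also have "\<dots> = U * V"
      using cancel_l[OF Ric Rzc Vc RiR] by simp
    finally show ?thesis using UV by simp
  qed
  have P0': "P 0 = P0"
    using Rz0 Vc Uc c UV by (simp add: P_def right_mult_one_mat)
  have Pt: "P t = P1"
  proof -
    have "P t = P0 * (U * (R * V))" by (simp add: P_def Rzt)
    also have "\<dots> = P0 * N" using NR Uc Rc Vc by (simp add: assoc_n mult_n)
    also have "\<dots> = P1" using cancel_l[OF c(1) c(2) c(3) i0(1)] by (simp add: N_def)
    finally show ?thesis .
  qed
  have Qinv: "Q z = Q'" if "P z = P'" "P' * Q' = 1\<^sub>m n" "Q' \<in> carrier_mat n n" "P' \<in> carrier_mat n n" for z P' Q'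
  proof -
    have Qc: "Q z \<in> carrier_mat n n" using hQ by (auto simp: hm_def)
    have "Q z = Q z * (P' * Q')" using that Qc by (simp add: right_mult_one_mat)
    also have "\<dots> = (Q z * P z) * Q'" using that Qc by (simp add: assoc_n mult_n)
    also have "\<dots> = Q'" using QP[of z] that by (simp add: left_mult_one_mat)
    finally show ?thesis .
  qed
  have Q0': "Q 0 = Q0" using Qinv[OF P0' i0(1) c(2) c(1)] .
  have Qt: "Q t = Q1" using Qinv[OF Pt i1(1) c(4) c(3)] .
  show ?thesis using hP hQ PQ QP P0' Pt Q0' Qt by blast
qed


lemma prod_lessThan_list: "(\<Prod>j<n. f j) = prod_list (map f [0..<n])"
  by (induction n) (auto simp: mult.commute)

lemma hm_subset: "hm n F T \<Longrightarrow> S \<subseteq> T \<Longrightarrow> hm n F S"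
  unfolding hm_def using holomorphic_on_subset by blast

lemma schur_ex:
  fixes A :: "complex mat"
  assumes A: "A \<in> carrier_mat n n" and cp: "char_poly A = (\<Prod>j<n. [:- lam j, 1:])"
  shows "\<exists>T P Q. similar_mat_wit A T P Q \<and> upper_triangular T \<and> (\<forall>i<n. T $$ (i,i) = lam i)"
proof -
  have cp': "char_poly A = (\<Prod>a\<leftarrow>map lam [0..<n]. [:- a, 1:])"
    unfolding cp prod_lessThan_list by (simp add: o_def)
  obtain T P Q where sd: "schur_decomposition A (map lam [0..<n]) = (T,P,Q)"
    by (cases "schur_decomposition A (map lam [0..<n])") auto
  from schur_decomposition[OF A cp' sd] have sw: "similar_mat_wit A T P Q" and ut: "upper_triangular T"
    and dg: "diag_mat T = map lam [0..<n]" by auto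
  have "\<forall>i<n. T $$ (i,i) = lam i"
  proof (intro allI impI)
    fix i assume i: "i < n"
    have "diag_mat T ! i = lam i" using dg i by simp
    moreover have "dim_row T = n" using sw A by (auto simp: similar_mat_wit_def Let_def)
    ultimately show "T $$ (i,i) = lam i" using i by (simp add: diag_mat_def)
  qed
  then show ?thesis using sw ut by blast
qed

lemma disc_exists:
  fixes A B :: "complex mat" and lam nu :: "nat \<Rightarrow> complex" and t :: real
  assumes n: "n \<ge> 1" and A: "A \<in> spectral_ball n" and B: "B \<in> spectral_ball n"
    and cpA: "char_poly A = (\<Prod>j<n. [:- lam j, 1:])"
    and cpB: "char_poly B = (\<Prod>j<n. [:- nu j, 1:])"
    and d: "\<And>j. j < n \<Longrightarrow> moebius_dist (lam j) (nu j) < t" and t1: "t < 1"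
  shows "\<exists>\<phi>. holo_mat n \<phi> (ball 0 1) \<and> (\<forall>\<zeta>\<in>ball 0 1. \<phi> \<zeta> \<in> spectral_ball n)
          \<and> \<phi> 0 = A \<and> \<phi> (of_real t) = B"
proof -
  have Ac: "A \<in> carrier_mat n n" and Bc: "B \<in> carrier_mat n n" using A B by (auto simp: spectral_ball_def)
  have "moebius_dist (lam 0) (nu 0) \<ge> 0" by (simp add: moebius_dist_def)
  moreover have "moebius_dist (lam 0) (nu 0) < t" using d[of 0] n by simp
  ultimately have t0: "t > 0" by linarith
  have "\<forall>j. \<exists>f. j < n \<longrightarrow> (f holomorphic_on ball 0 1 \<and> (\<forall>z\<in>ball 0 1. norm (f z) < 1) \<and> f 0 = lam j \<and> f (of_real t) = nu j)"
  proof (intro allI)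
    fix j show "\<exists>f. j < n \<longrightarrow> (f holomorphic_on ball 0 1 \<and> (\<forall>z\<in>ball 0 1. norm (f z) < 1) \<and> f 0 = lam j \<and> f (of_real t) = nu j)"
    proof (cases "j < n")
      case True
      then show ?thesis using disc_interp[OF root_lt1[OF A cpA True] root_lt1[OF B cpB True] d[OF True] t1] by blast
    qed auto
  qed
  then obtain F where F: "\<And>j. j < n \<Longrightarrow> F j holomorphic_on ball 0 1 \<and> (\<forall>z\<in>ball 0 1. norm (F j z) < 1) \<and> F j 0 = lam j \<and> F j (of_real t) = nu j"
    by metis
  obtain T0 P0 Q0 where s0: "similar_mat_wit A T0 P0 Q0" "upper_triangular T0" "\<forall>i<n. T0 $$ (i,i) = lam i"
    using schur_ex[OF Ac cpA] by blast
  obtain T1 P1 Q1 where s1: "similar_mat_wit B T1 P1 Q1" "upper_triangular T1" "\<forall>i<n. T1 $$ (i,i) = nu i"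
    using schur_ex[OF Bc cpB] by blast
  from s0(1) Ac have c0: "T0 \<in> carrier_mat n n" "P0 \<in> carrier_mat n n" "Q0 \<in> carrier_mat n n"
    "P0 * Q0 = 1\<^sub>m n" "Q0 * P0 = 1\<^sub>m n" "A = P0 * T0 * Q0" by (auto simp: similar_mat_wit_def Let_def)
  from s1(1) Bc have c1: "T1 \<in> carrier_mat n n" "P1 \<in> carrier_mat n n" "Q1 \<in> carrier_mat n n"
    "P1 * Q1 = 1\<^sub>m n" "Q1 * P1 = 1\<^sub>m n" "B = P1 * T1 * Q1" by (auto simp: similar_mat_wit_def Let_def)
  obtain P Q where PQ: "hm n P UNIV" "hm n Q UNIV" "\<forall>z. P z * Q z = 1\<^sub>m n \<and> Q z * P z = 1\<^sub>m n"
    "P 0 = P0" "P (of_real t) = P1" "Q 0 = Q0" "Q (of_real t) = Q1"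
    using gl_path[OF c0(2) c0(3) c1(2) c1(3) c0(4) c0(5) c1(4) c1(5), of "of_real t"] t0 by auto
  define T where "T z = mat n n (\<lambda>(i,j). if i = j then F i z else if i < j then (1 - z / of_real t) * T0 $$ (i,j) + z / of_real t * T1 $$ (i,j) else 0)" for z
  have Tc: "T z \<in> carrier_mat n n" for z by (simp add: T_def)
  have Tut: "upper_triangular (T z)" for z by (auto simp: T_def upper_triangular_def)
  have hT: "hm n T (ball 0 1)" unfolding T_def
  proof (rule hm_mat)
    fix i j assume ij: "i < n" "j < n"
    show "(\<lambda>z. if i = j then F i z else if i < j then (1 - z / of_real t) * T0 $$ (i,j) + z / of_real t * T1 $$ (i,j) else 0) holomorphic_on ball 0 1"
      by (cases "i = j"; cases "i < j") (use F ij in \<open>auto intro!: holomorphic_intros\<close>)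
  qed
  define \<phi> where "\<phi> z = P z * T z * Q z" for z
  have Pc: "P z \<in> carrier_mat n n" "Q z \<in> carrier_mat n n" for z using PQ(1,2) by (auto simp: hm_def)
  have h\<phi>: "hm n \<phi> (ball 0 1)" unfolding \<phi>_def
    by (intro hm_mult hT hm_subset[OF PQ(1)] hm_subset[OF PQ(2)]) auto
  have \<phi>c: "\<phi> z \<in> carrier_mat n n" for z using Pc Tc by (simp add: \<phi>_def mult_n)
  have sb: "\<phi> z \<in> spectral_ball n" if z: "z \<in> ball 0 1" for z
  proof -
    have "similar_mat_wit (\<phi> z) (T z) (P z) (Q z)"
      using \<phi>c[of z] Tc[of z] Pc[of z] PQ(3) by (auto simp: similar_mat_wit_def Let_def \<phi>_def)
    then have "char_poly (\<phi> z) = char_poly (T z)" by (intro char_poly_similar) (auto simp: similar_mat_def)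
    also have "\<dots> = (\<Prod>a\<leftarrow>diag_mat (T z). [:- a, 1:])" by (rule char_poly_upper_triangular[OF Tc Tut])
    finally have cp: "char_poly (\<phi> z) = (\<Prod>a\<leftarrow>diag_mat (T z). [:- a, 1:])" .
    have "\<And>x. x \<in> set (diag_mat (T z)) \<Longrightarrow> norm x < 1"
      using F z by (auto simp: diag_mat_def T_def)
    then have "spectral_radius (\<phi> z) < 1" using sr_linear_lt1[OF \<phi>c _ cp] n by auto
    then show ?thesis using \<phi>c by (simp add: spectral_ball_def)
  qed
  have T0': "T 0 = T0"
    by (rule eq_matI) (use c0(1) s0(2,3) F in \<open>auto simp: T_def upper_triangular_def\<close>)
  have T1': "T (of_real t) = T1"
    by (rule eq_matI) (use c1(1) s1(2,3) F t0 in \<open>auto simp: T_def upper_triangular_def\<close>)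
  have "\<phi> 0 = A" using c0(6) PQ(4,6) T0' by (simp add: \<phi>_def)
  moreover have "\<phi> (of_real t) = B" using c1(6) PQ(5,7) T1' by (simp add: \<phi>_def)
  moreover have "holo_mat n \<phi> (ball 0 1)" using h\<phi> by (simp add: hm_def holo_mat_def)
  ultimately show ?thesis using sb by blast
qed


lemma moebius_dist_lt1: "norm a < 1 \<Longrightarrow> norm b < 1 \<Longrightarrow> moebius_dist a b < 1"
  using Moebius_function_norm_lt_1[of b a 0]
  by (simp add: moebius_dist_def Moebius_function_def mult.commute)

theorem proposition7:
  fixes n :: nat and A B :: "complex mat" and lam mu :: "nat \<Rightarrow> complex"
  assumes "n \<ge> 1"
    and "A \<in> spectral_ball n" and "B \<in> spectral_ball n"
    and "char_poly A = (\<Prod>j<n. [:- lam j, 1:])"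
    and "char_poly B = (\<Prod>j<n. [:- mu j, 1:])"
  shows "lempert_vec n (symmetrized_polydisc n) (sigma_map A) (sigma_map B)
           \<le> lempert_mat n (spectral_ball n) A B
       \<and> lempert_mat n (spectral_ball n) A B
           \<le> Min {Max {moebius_dist (lam j) (mu (\<pi> j)) | j. j < n} | \<pi>. \<pi> permutes {..<n}}"
proof -
  note n = assms(1) and A = assms(2) and B = assms(3) and cpA = assms(4) and cpB = assms(5)
  define g where "g \<pi> = Max {moebius_dist (lam j) (mu (\<pi> j)) | j. j < n}" for \<pi> :: "nat \<Rightarrow> nat"
  define PP where "PP = {\<pi>. \<pi> permutes {..<n}}"
  have seteq: "{Max {moebius_dist (lam j) (mu (\<pi> j)) | j. j < n} | \<pi>. \<pi> permutes {..<n}} = g ` PP"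
    by (auto simp: g_def PP_def)
  have finPi: "finite PP" unfolding PP_def by (rule finite_permutations) simp
  have nePi: "PP \<noteq> {}" unfolding PP_def using permutes_id by blast
  obtain \<pi>0 where p0: "\<pi>0 \<in> PP" "g \<pi>0 = Min (g ` PP)"
  proof -
    have "Min (g ` PP) \<in> g ` PP" using Min_in[of "g ` PP"] finPi nePi by auto
    then show ?thesis using that by force
  qed
  define r where "r = g \<pi>0"
  have perm: "\<pi>0 permutes {..<n}" using p0 PP_def by auto
  have fin: "finite {moebius_dist (lam j) (mu (\<pi>0 j)) | j. j < n}" by simp
  have le_r: "moebius_dist (lam j) (mu (\<pi>0 j)) \<le> r" if "j < n" for j
    unfolding r_def g_def by (rule Max_ge[OF fin]) (use that in auto)
  have lam1: "norm (lam j) < 1" if "j < n" for j using root_lt1[OF A cpA that] .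
  have mu1: "norm (mu j) < 1" if "j < n" for j using root_lt1[OF B cpB that] .
  have r1: "r < 1"
  proof -
    have "r \<in> {moebius_dist (lam j) (mu (\<pi>0 j)) | j. j < n}"
      unfolding r_def g_def by (rule Max_in[OF fin]) (use n in \<open>auto intro: exI[of _ 0]\<close>)
    then obtain j where j: "j < n" "r = moebius_dist (lam j) (mu (\<pi>0 j))" by auto
    have "\<pi>0 j < n" using perm j permutes_in_image by fastforce
    then show ?thesis using j moebius_dist_lt1 lam1 mu1 by auto
  qed
  have "moebius_dist (lam 0) (mu (\<pi>0 0)) \<ge> 0" by (simp add: moebius_dist_def)
  moreover have "moebius_dist (lam 0) (mu (\<pi>0 0)) \<le> r" using le_r[of 0] n by simp
  ultimately have r0: "r \<ge> 0" by linarith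
  have cpB': "char_poly B = (\<Prod>j<n. [:- (mu \<circ> \<pi>0) j, 1:])"
    unfolding cpB using prod.permute[OF perm, of "\<lambda>j. [:- mu j, 1:]"] by (simp add: o_def)
  define SM where "SM = {cmod \<alpha> | \<alpha>. \<exists>\<phi>. holo_mat n \<phi> (ball 0 1) \<and>
      (\<forall>\<zeta>\<in>ball 0 1. \<phi> \<zeta> \<in> spectral_ball n) \<and> \<phi> 0 = A \<and> \<alpha> \<in> ball 0 1 \<and> \<phi> \<alpha> = B}"
  define SV where "SV = {cmod \<alpha> | \<alpha>. \<exists>\<phi>. holo_vec n \<phi> (ball 0 1) \<and>
      (\<forall>\<zeta>\<in>ball 0 1. \<phi> \<zeta> \<in> symmetrized_polydisc n) \<and> \<phi> 0 = sigma_map A \<and> \<alpha> \<in> ball 0 1 \<and> \<phi> \<alpha> = sigma_map B}"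
  have inSM: "t \<in> SM" if t: "r < t" "t < 1" for t
  proof -
    have "moebius_dist (lam j) ((mu \<circ> \<pi>0) j) < t" if "j < n" for j
      using le_r[OF that] t(1) by simp
    from disc_exists[OF n A B cpA cpB' this t(2)] obtain \<phi> where
      "holo_mat n \<phi> (ball 0 1)" "\<forall>\<zeta>\<in>ball 0 1. \<phi> \<zeta> \<in> spectral_ball n" "\<phi> 0 = A" "\<phi> (of_real t) = B"
      by blast
    moreover have "of_real t \<in> ball (0::complex) 1" "cmod (of_real t) = t" using t r0 by auto
    ultimately have "\<exists>\<alpha>. t = cmod \<alpha> \<and> (\<exists>\<phi>. holo_mat n \<phi> (ball 0 1) \<and>
      (\<forall>\<zeta>\<in>ball 0 1. \<phi> \<zeta> \<in> spectral_ball n) \<and> \<phi> 0 = A \<and> \<alpha> \<in> ball 0 1 \<and> \<phi> \<alpha> = B)"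
      by (intro exI[of _ "of_real t"]) metis
    then show ?thesis unfolding SM_def by blast
  qed
  have bdd: "bdd_below SM" "bdd_below SV" unfolding SM_def SV_def by (auto intro: bdd_belowI[of _ 0])
  have ne: "SM \<noteq> {}" using inSM[of "(r + 1) / 2"] r1 by auto
  have part2: "Inf SM \<le> r"
  proof (rule dense_ge_bounded[OF r1])
    fix w assume "r < w" "w < 1"
    then show "Inf SM \<le> w" using inSM cInf_lower bdd(1) by blast
  qed
  have sub: "SM \<subseteq> SV"
  proof
    fix x assume "x \<in> SM"
    then obtain \<alpha> \<phi> where x: "x = cmod \<alpha>" and h: "holo_mat n \<phi> (ball 0 1)"
      and inb: "\<forall>\<zeta>\<in>ball 0 1. \<phi> \<zeta> \<in> spectral_ball n" and a0: "\<phi> 0 = A" and a: "\<alpha> \<in> ball 0 1" "\<phi> \<alpha> = B"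
      unfolding SM_def by blast
    have car: "\<And>\<zeta>. \<zeta> \<in> ball 0 1 \<Longrightarrow> \<phi> \<zeta> \<in> carrier_mat n n" using inb by (auto simp: spectral_ball_def)
    have hm: "hm n \<phi> (ball 0 1)" using h car by (auto simp: hm_def holo_mat_def)
    have hv: "holo_vec n (\<lambda>\<zeta>. sigma_map (\<phi> \<zeta>)) (ball 0 1)"
      unfolding holo_vec_def
    proof (intro allI impI)
      fix k assume k: "k < n"
      have "(\<lambda>z. (-1) ^ Suc k * coeff (char_poly (\<phi> z)) (n - Suc k)) holomorphic_on ball 0 1"
        by (intro holomorphic_intros hm_char_poly_coeff[OF hm])
      then show "(\<lambda>z. sigma_map (\<phi> z) $ k) holomorphic_on ball 0 1"
      proof (rule holomorphic_transform)
        fix z :: complex assume "z \<in> ball 0 1"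
        then have "dim_row (\<phi> z) = n" using car by auto
        then show "(-1) ^ Suc k * coeff (char_poly (\<phi> z)) (n - Suc k) = sigma_map (\<phi> z) $ k"
          using k by (simp add: sigma_map_def sigma_j_def)
      qed
    qed
    have "\<forall>\<zeta>\<in>ball 0 1. sigma_map (\<phi> \<zeta>) \<in> symmetrized_polydisc n"
      using inb by (auto simp: symmetrized_polydisc_def)
    then show "x \<in> SV" unfolding SV_def using hv a0 a x by blast
  qed
  have part1: "Inf SV \<le> Inf SM" by (rule cInf_superset_mono[OF ne bdd(2) sub])
  have "Min (g ` PP) = r" using p0 r_def by simp
  then show ?thesis
    using part1 part2 unfolding lempert_vec_def lempert_mat_def SM_def[symmetric] SV_def[symmetric] seteq
    by simp
qed

end
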